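(* Let $(X,\delta,\epsilon)$ be an $X$-self-adjoint internal commutative comonoid in a $\dagger$-compact category. Then: (i) the Frobenius identity $\delta\circ\delta^\dagger=(\delta^\dagger\otimes 1_X)\circ(1_X\otimes\delta)$ holds; (ii) $\delta$ is invariant under partial transpose: $(1_X\otimes\eta_X^\dagger\otimes 1_X)\circ(\sigma_{X,X}\otimes\delta)\circ(1_X\otimes\eta_X)=\delta$; (iii) $\delta_*=\delta$ (equivalently $\delta^*=\delta^\dagger$), where $\delta_*$ is regarded as a morphism $X\to X\otimes X$ via $X^*=X$ and $(X\otimes X)^*=X^*\otimes X^*=X\otimes X$.
   Context: A $\dagger$-compact category is a symmetric monoidal category $(\mathbf{C},\otimes,\mathrm{I})$, treated as strict (associators and unitors suppressed), with symmetry $\sigma_{A,B}:A\otimes B\to B\otimes A$, equipped with a contravariant functor $(-)^\dagger$ which is the identity on objects, involutive and monoidal (structural isomorphisms unitary), together with, for each object $A$, an object $A^*$ (with $A^{**}=A$) and a morphism $\eta_A:\mathrm{I}\to A^*\otimes A$ such that $\eta_{A^*}=\sigma_{A^*,A}\circ\eta_A$ and $(\eta_{A^*}^\dagger\otimes 1_A)\circ(1_A\otimes\eta_A)=1_A$. Duals of tensor products are the canonical ones: $(A\otimes B)^*=A^*\otimes B^*$ with $\eta_{A\otimes B}=(1_{A^*}\otimes\sigma_{A,B^*}\otimes 1_B)\circ(\eta_A\otimes\eta_B)$. For $f:A\to B$ define $f^*:B^*\to A^*$ by $f^*:=(1_{A^*}\otimes\eta_{B^*}^\dagger)\circ(1_{A^*}\otimes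 f\otimes 1_{B^*})\circ(\eta_A\otimes 1_{B^*})$, and the conjugate $f_*:=(f^\dagger)^*:A^*\to B^*$. An internal commutative comonoid is $(X,\delta,\epsilon)$ with $\delta:X\to X\otimes X$, $\epsilon:X\to\mathrm{I}$ satisfying $(\delta\otimes 1_X)\circ\delta=(1_X\otimes\delta)\circ\delta$, $(\epsilon\otimes 1_X)\circ\delta=1_X=(1_X\otimes\epsilon)\circ\delta$ and $\sigma_{X,X}\circ\delta=\delta$. It is called $X$-self-adjoint if the dual of $X$ in the $\dagger$-compact structure is $X^*=X$ with $\eta_X=\delta\circ\epsilon^\dagger$, and $\delta=(1_X\otimes\delta^\dagger)\circ(\eta_X\otimes 1_X)$. *)

theory Defs
  imports Main
begin

text \<open>A (strict) symmetric monoidal category with dagger and chosen duals,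
  presented concretely: objects of type 'o, morphisms of type 'm.
  cmp C g f is the composite g after f.\<close>

record ('o, 'm) dcat =
  Obj :: "'o set"
  Arr :: "'m set"
  dom :: "'m \<Rightarrow> 'o"
  cod :: "'m \<Rightarrow> 'o"
  cmp :: "'m \<Rightarrow> 'm \<Rightarrow> 'm"
  idt :: "'o \<Rightarrow> 'm"
  tno :: "'o \<Rightarrow> 'o \<Rightarrow> 'o"
  tnm :: "'m \<Rightarrow> 'm \<Rightarrow> 'm"
  unt :: "'o"
  sym :: "'o \<Rightarrow> 'o \<Rightarrow> 'm"
  dag :: "'m \<Rightarrow> 'm"
  dual :: "'o \<Rightarrow> 'o"
  eta :: "'o \<Rightarrow> 'm"

locale dagger_compact =
  fixes C :: "('o, 'm) dcat"
  assumes
    dom_obj: "f \<in> Arr C \<Longrightarrow> dom C f \<in> Obj C"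
  and cod_obj: "f \<in> Arr C \<Longrightarrow> cod C f \<in> Obj C"
  and idt_arr: "A \<in> Obj C \<Longrightarrow> idt C A \<in> Arr C"
  and dom_idt: "A \<in> Obj C \<Longrightarrow> dom C (idt C A) = A"
  and cod_idt: "A \<in> Obj C \<Longrightarrow> cod C (idt C A) = A"
  and cmp_arr: "\<lbrakk>f \<in> Arr C; g \<in> Arr C; cod C f = dom C g\<rbrakk> \<Longrightarrow> cmp C g f \<in> Arr C"
  and dom_cmp: "\<lbrakk>f \<in> Arr C; g \<in> Arr C; cod C f = dom C g\<rbrakk> \<Longrightarrow> dom C (cmp C g f) = dom C f"
  and cod_cmp: "\<lbrakk>f \<in> Arr C; g \<in> Arr C; cod C f = dom C g\<rbrakk> \<Longrightarrow> cod C (cmp C g f) = cod C g"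
  and cmp_idl: "f \<in> Arr C \<Longrightarrow> cmp C (idt C (cod C f)) f = f"
  and cmp_idr: "f \<in> Arr C \<Longrightarrow> cmp C f (idt C (dom C f)) = f"
  and cmp_assoc: "\<lbrakk>f \<in> Arr C; g \<in> Arr C; h \<in> Arr C; cod C f = dom C g; cod C g = dom C h\<rbrakk>
      \<Longrightarrow> cmp C h (cmp C g f) = cmp C (cmp C h g) f"
  and unt_obj: "unt C \<in> Obj C"
  and tno_obj: "\<lbrakk>A \<in> Obj C; B \<in> Obj C\<rbrakk> \<Longrightarrow> tno C A B \<in> Obj C"
  and tnm_arr: "\<lbrakk>f \<in> Arr C; g \<in> Arr C\<rbrakk> \<Longrightarrow> tnm C f g \<in> Arr C"
  and dom_tnm: "\<lbrakk>f \<in> Arr C; g \<in> Arr C\<rbrakk> \<Longrightarrow> dom C (tnm C f g) = tno C (dom C f) (dom C g)"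
  and cod_tnm: "\<lbrakk>f \<in> Arr C; g \<in> Arr C\<rbrakk> \<Longrightarrow> cod C (tnm C f g) = tno C (cod C f) (cod C g)"
  and tnm_idt: "\<lbrakk>A \<in> Obj C; B \<in> Obj C\<rbrakk> \<Longrightarrow> tnm C (idt C A) (idt C B) = idt C (tno C A B)"
  and tnm_cmp: "\<lbrakk>f \<in> Arr C; g \<in> Arr C; cod C f = dom C g; f' \<in> Arr C; g' \<in> Arr C; cod C f' = dom C g'\<rbrakk>
      \<Longrightarrow> tnm C (cmp C g f) (cmp C g' f') = cmp C (tnm C g g') (tnm C f f')"
  and tno_assoc: "\<lbrakk>A \<in> Obj C; B \<in> Obj C; D \<in> Obj C\<rbrakk> \<Longrightarrow> tno C (tno C A B) D = tno C A (tno C B D)"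
  and tnm_assoc: "\<lbrakk>f \<in> Arr C; g \<in> Arr C; h \<in> Arr C\<rbrakk> \<Longrightarrow> tnm C (tnm C f g) h = tnm C f (tnm C g h)"
  and tno_unit_l: "A \<in> Obj C \<Longrightarrow> tno C (unt C) A = A"
  and tno_unit_r: "A \<in> Obj C \<Longrightarrow> tno C A (unt C) = A"
  and tnm_unit_l: "f \<in> Arr C \<Longrightarrow> tnm C (idt C (unt C)) f = f"
  and tnm_unit_r: "f \<in> Arr C \<Longrightarrow> tnm C f (idt C (unt C)) = f"
  and sym_arr: "\<lbrakk>A \<in> Obj C; B \<in> Obj C\<rbrakk> \<Longrightarrow> sym C A B \<in> Arr C"
  and dom_sym: "\<lbrakk>A \<in> Obj C; B \<in> Obj C\<rbrakk> \<Longrightarrow> dom C (sym C A B) = tno C A B"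
  and cod_sym: "\<lbrakk>A \<in> Obj C; B \<in> Obj C\<rbrakk> \<Longrightarrow> cod C (sym C A B) = tno C B A"
  and sym_nat: "\<lbrakk>f \<in> Arr C; g \<in> Arr C\<rbrakk> \<Longrightarrow>
      cmp C (sym C (cod C f) (cod C g)) (tnm C f g) = cmp C (tnm C g f) (sym C (dom C f) (dom C g))"
  and sym_inv: "\<lbrakk>A \<in> Obj C; B \<in> Obj C\<rbrakk> \<Longrightarrow> cmp C (sym C B A) (sym C A B) = idt C (tno C A B)"
  and sym_hex: "\<lbrakk>A \<in> Obj C; B \<in> Obj C; D \<in> Obj C\<rbrakk> \<Longrightarrow>
      sym C A (tno C B D) = cmp C (tnm C (idt C B) (sym C A D)) (tnm C (sym C A B) (idt C D))"
  and dag_arr: "f \<in> Arr C \<Longrightarrow> dag C f \<in> Arr C"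
  and dom_dag: "f \<in> Arr C \<Longrightarrow> dom C (dag C f) = cod C f"
  and cod_dag: "f \<in> Arr C \<Longrightarrow> cod C (dag C f) = dom C f"
  and dag_idt: "A \<in> Obj C \<Longrightarrow> dag C (idt C A) = idt C A"
  and dag_cmp: "\<lbrakk>f \<in> Arr C; g \<in> Arr C; cod C f = dom C g\<rbrakk> \<Longrightarrow> dag C (cmp C g f) = cmp C (dag C f) (dag C g)"
  and dag_dag: "f \<in> Arr C \<Longrightarrow> dag C (dag C f) = f"
  and dag_tnm: "\<lbrakk>f \<in> Arr C; g \<in> Arr C\<rbrakk> \<Longrightarrow> dag C (tnm C f g) = tnm C (dag C f) (dag C g)"
  and dag_sym: "\<lbrakk>A \<in> Obj C; B \<in> Obj C\<rbrakk> \<Longrightarrow> dag C (sym C A B) = sym C B A"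
  and dual_obj: "A \<in> Obj C \<Longrightarrow> dual C A \<in> Obj C"
  and dual_dual: "A \<in> Obj C \<Longrightarrow> dual C (dual C A) = A"
  and eta_arr: "A \<in> Obj C \<Longrightarrow> eta C A \<in> Arr C"
  and dom_eta: "A \<in> Obj C \<Longrightarrow> dom C (eta C A) = unt C"
  and cod_eta: "A \<in> Obj C \<Longrightarrow> cod C (eta C A) = tno C (dual C A) A"
  and eta_dual: "A \<in> Obj C \<Longrightarrow> eta C (dual C A) = cmp C (sym C (dual C A) A) (eta C A)"
  and yank: "A \<in> Obj C \<Longrightarrow>
      cmp C (tnm C (dag C (eta C (dual C A))) (idt C A)) (tnm C (idt C A) (eta C A)) = idt C A"
  and dual_tno: "\<lbrakk>A \<in> Obj C; B \<in> Obj C\<rbrakk> \<Longrightarrow> dual C (tno C A B) = tno C (dual C A) (dual C B)"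
  and eta_tno: "\<lbrakk>A \<in> Obj C; B \<in> Obj C\<rbrakk> \<Longrightarrow> eta C (tno C A B) =
      cmp C (tnm C (tnm C (idt C (dual C A)) (sym C A (dual C B))) (idt C B)) (tnm C (eta C A) (eta C B))"

definition dstar :: "('o, 'm) dcat \<Rightarrow> 'm \<Rightarrow> 'm" where
  "dstar C f = (let A = dom C f; B = cod C f in
     cmp C (tnm C (idt C (dual C A)) (dag C (eta C (dual C B))))
       (cmp C (tnm C (tnm C (idt C (dual C A)) f) (idt C (dual C B)))
              (tnm C (eta C A) (idt C (dual C B)))))"

definition dconj :: "('o, 'm) dcat \<Rightarrow> 'm \<Rightarrow> 'm" where
  "dconj C f = dstar C (dag C f)"

definition comm_comonoid :: "('o, 'm) dcat \<Rightarrow> 'o \<Rightarrow> 'm \<Rightarrow> 'm \<Rightarrow> bool" where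
  "comm_comonoid C X d e \<longleftrightarrow>
     X \<in> Obj C \<and> d \<in> Arr C \<and> dom C d = X \<and> cod C d = tno C X X
   \<and> e \<in> Arr C \<and> dom C e = X \<and> cod C e = unt C
   \<and> cmp C (tnm C d (idt C X)) d = cmp C (tnm C (idt C X) d) d
   \<and> cmp C (tnm C e (idt C X)) d = idt C X
   \<and> cmp C (tnm C (idt C X) e) d = idt C X
   \<and> cmp C (sym C X X) d = d"

definition self_adjoint :: "('o, 'm) dcat \<Rightarrow> 'o \<Rightarrow> 'm \<Rightarrow> 'm \<Rightarrow> bool" where
  "self_adjoint C X d e \<longleftrightarrow>
     dual C X = X \<and> eta C X = cmp C d (dag C e)
   \<and> d = cmp C (tnm C (idt C X) (dag C d)) (tnm C (eta C X) (idt C X))"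

end

theory Submission imports Defs begin

context dagger_compact begin

lemma cmp_idl': "f \<in> Arr C \<Longrightarrow> cod C f = A \<Longrightarrow> cmp C (idt C A) f = f"
  using cmp_idl by blast
lemma cmp_idr': "f \<in> Arr C \<Longrightarrow> dom C f = A \<Longrightarrow> cmp C f (idt C A) = f"
  using cmp_idr by blast
lemma cmp_assoc': "\<lbrakk>f \<in> Arr C; g \<in> Arr C; h \<in> Arr C; cod C f = dom C g; cod C g = dom C h\<rbrakk>
      \<Longrightarrow> cmp C (cmp C h g) f = cmp C h (cmp C g f)"
  using cmp_assoc by simp
lemma tno_assoc': "\<lbrakk>A \<in> Obj C; B \<in> Obj C; D \<in> Obj C\<rbrakk> \<Longrightarrow> tno C (tno C A B) D = tno C A (tno C B D)"
  by (rule tno_assoc)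
lemma tnm_assoc': "\<lbrakk>f \<in> Arr C; g \<in> Arr C; h \<in> Arr C\<rbrakk> \<Longrightarrow> tnm C (tnm C f g) h = tnm C f (tnm C g h)"
  by (rule tnm_assoc)

lemmas ty = dom_obj cod_obj idt_arr dom_idt cod_idt cmp_arr dom_cmp cod_cmp unt_obj tno_obj
  tnm_arr dom_tnm cod_tnm sym_arr dom_sym cod_sym dag_arr dom_dag cod_dag dual_obj eta_arr
  dom_eta cod_eta tno_assoc' tno_unit_l tno_unit_r

lemma tnm_idt_assoc: "\<lbrakk>A \<in> Obj C; B \<in> Obj C; f \<in> Arr C\<rbrakk> \<Longrightarrow> tnm C (idt C A) (tnm C (idt C B) f) = tnm C (idt C (tno C A B)) f"
  by (metis idt_arr tnm_assoc tnm_idt)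

lemmas nf = tnm_idt_assoc cmp_idl' cmp_idr' cmp_assoc' tnm_assoc' tnm_unit_l tnm_unit_r tnm_idt dag_dag dag_idt

lemma sym_unit: "A \<in> Obj C \<Longrightarrow> sym C A (unt C) = idt C A"
proof -
  assume A: "A \<in> Obj C"
  let ?s = "sym C A (unt C)"
  have h: "?s = cmp C ?s ?s"
    using sym_hex[OF A unt_obj unt_obj] A by (simp add: ty nf)
  have i: "cmp C (sym C (unt C) A) ?s = idt C A"
    using sym_inv[OF A unt_obj] A by (simp add: ty)
  have "?s = cmp C (cmp C (sym C (unt C) A) ?s) ?s" using i A by (simp add: ty nf)
  also have "\<dots> = cmp C (sym C (unt C) A) (cmp C ?s ?s)" using A by (simp add: ty nf)
  also have "\<dots> = idt C A" using h i by simp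
  finally show ?thesis .
qed

end

locale sac = dagger_compact C for C :: "('o,'m) dcat" +
  fixes X d e
  assumes cc: "comm_comonoid C X d e" and sa: "self_adjoint C X d e"
begin

abbreviation cp (infixr "\<cdot>" 55) where "g \<cdot> f \<equiv> cmp C g f"
abbreviation tn (infixr "\<otimes>" 70) where "f \<otimes> g \<equiv> tnm C f g"
abbreviation "XX \<equiv> idt C (tno C X X)"
abbreviation "one \<equiv> idt C X"
abbreviation "mu \<equiv> dag C d"
abbreviation "et \<equiv> eta C X"
abbreviation "etd \<equiv> dag C (eta C X)"
abbreviation "sg \<equiv> sym C X X"
abbreviation "I \<equiv> unt C"

lemma X[simp]: "X \<in> Obj C" and d[simp]: "d \<in> Arr C" "dom C d = X" "cod C d = tno C X X"
  and e[simp]: "e \<in> Arr C" "dom C e = X" "cod C e = unt C"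
  and dX[simp]: "dual C X = X"
  using cc sa unfolding comm_comonoid_def self_adjoint_def by auto

lemma eta_def': "et = cmp C d (dag C e)" using sa unfolding self_adjoint_def by auto
lemma SA: "d = cmp C (tnm C one mu) (tnm C et one)" using sa unfolding self_adjoint_def by auto
lemma coassoc: "cmp C (tnm C d one) d = cmp C (tnm C one d) d" using cc unfolding comm_comonoid_def by auto
lemma counitl: "cmp C (tnm C e one) d = one" using cc unfolding comm_comonoid_def by auto
lemma counitr: "cmp C (tnm C one e) d = one" using cc unfolding comm_comonoid_def by auto
lemma comm: "cmp C sg d = d" using cc unfolding comm_comonoid_def by auto

lemma et_sym: "cmp C sg et = et" using eta_dual[OF X] by simp

lemma SAd: "mu = cmp C (tnm C etd one) (tnm C one d)"
proof -
  have "mu = dag C (cmp C (tnm C one mu) (tnm C et one))" using SA by simp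
  also have "\<dots> = cmp C (tnm C etd one) (tnm C one d)"
    by (simp add: ty nf dag_cmp dag_tnm)
  finally show ?thesis .
qed

lemma assoc_mu: "cmp C mu (tnm C mu one) = cmp C mu (tnm C one mu)"
proof -
  have "dag C (cmp C (tnm C d one) d) = dag C (cmp C (tnm C one d) d)" using coassoc by simp
  thus ?thesis by (simp add: ty nf dag_cmp dag_tnm)
qed

lemma comm_mu: "cmp C mu sg = mu"
proof -
  have "dag C (cmp C sg d) = mu" using comm by simp
  thus ?thesis by (simp add: ty nf dag_cmp dag_sym)
qed

lemma etd_sym: "cmp C etd sg = etd"
proof -
  have "dag C (cmp C sg et) = etd" using et_sym by simp
  thus ?thesis by (simp add: ty nf dag_cmp dag_sym)
qed

lemma etd_def: "etd = cmp C e mu" by (simp add: eta_def' ty nf dag_cmp)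

lemma frobA: "d \<cdot> mu = (one \<otimes> mu) \<cdot> (d \<otimes> one)"
proof -
  have s1: "(et \<otimes> one) \<cdot> mu = et \<otimes> mu"
    using tnm_cmp[of "idt C I" et mu one] by (simp add: ty nf)
  have s2: "et \<otimes> mu = (XX \<otimes> mu) \<cdot> (et \<otimes> XX)"
    using tnm_cmp[of et XX XX mu] by (simp add: ty nf)
  have s3: "(one \<otimes> mu) \<cdot> (XX \<otimes> mu) = one \<otimes> (mu \<cdot> (one \<otimes> mu))"
    using tnm_cmp[of one one "one \<otimes> mu" mu] by (simp add: ty nf)
  have s4: "one \<otimes> (mu \<cdot> (mu \<otimes> one)) = (one \<otimes> mu) \<cdot> (one \<otimes> mu \<otimes> one)"
    using tnm_cmp[of one one "mu \<otimes> one" mu] by (simp add: ty nf)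
  have s5: "(one \<otimes> mu \<otimes> one) \<cdot> (et \<otimes> XX) = d \<otimes> one"
    using tnm_cmp[of "et \<otimes> one" "one \<otimes> mu" one one] SA[symmetric] by (simp add: ty nf)
  have "d \<cdot> mu = ((one \<otimes> mu) \<cdot> (et \<otimes> one)) \<cdot> mu" using SA by simp
  also have "\<dots> = (one \<otimes> mu) \<cdot> (XX \<otimes> mu) \<cdot> (et \<otimes> XX)"
    using s1 s2 by (simp add: ty nf)
  also have "\<dots> = ((one \<otimes> mu) \<cdot> (XX \<otimes> mu)) \<cdot> (et \<otimes> XX)"
    by (simp add: ty nf)
  also have "\<dots> = (one \<otimes> (mu \<cdot> (mu \<otimes> one))) \<cdot> (et \<otimes> XX)"
    using s3 assoc_mu by simp
  also have "\<dots> = (one \<otimes> mu) \<cdot> (d \<otimes> one)"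
    using s4 s5 by (simp add: ty nf)
  finally show ?thesis .
qed

lemma frob: "d \<cdot> mu = (mu \<otimes> one) \<cdot> (one \<otimes> d)"
proof -
  have "dag C (d \<cdot> mu) = dag C ((one \<otimes> mu) \<cdot> (d \<otimes> one))" using frobA by simp
  thus ?thesis by (simp add: ty nf dag_cmp dag_tnm)
qed


lemma s5: "(one \<otimes> mu \<otimes> one) \<cdot> (et \<otimes> XX) = d \<otimes> one"
    using tnm_cmp[of "et \<otimes> one" "one \<otimes> mu" one one] SA[symmetric] by (simp add: ty nf)

lemma sgsg: "sg \<cdot> sg = XX" using sym_inv[of X X] by simp

lemma hex: "sym C X (tno C X X) = (one \<otimes> sg) \<cdot> (sg \<otimes> one)"
  using sym_hex[of X X X] by simp

lemma hexinv: "sym C (tno C X X) X = (sg \<otimes> one) \<cdot> (one \<otimes> sg)"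
proof -
  let ?H = "(one \<otimes> sg) \<cdot> (sg \<otimes> one)" and ?K = "(sg \<otimes> one) \<cdot> (one \<otimes> sg)"
  have a: "(one \<otimes> sg) \<cdot> (one \<otimes> sg) = idt C (tno C X (tno C X X))"
    using tnm_cmp[of one one sg sg] sgsg by (simp add: ty nf)
  have b: "(sg \<otimes> one) \<cdot> (sg \<otimes> one) = idt C (tno C X (tno C X X))"
    using tnm_cmp[of sg sg one one] sgsg by (simp add: ty nf)
  have HK: "?H \<cdot> ?K = idt C (tno C X (tno C X X))"
  proof -
    have "?H \<cdot> ?K = (one \<otimes> sg) \<cdot> ((sg \<otimes> one) \<cdot> (sg \<otimes> one)) \<cdot> (one \<otimes> sg)"
      by (simp add: ty nf)
    also have "\<dots> = idt C (tno C X (tno C X X))" using a b by (simp add: ty nf)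
    finally show ?thesis .
  qed
  have inv: "sym C (tno C X X) X \<cdot> ?H = idt C (tno C X (tno C X X))"
    using sym_inv[of X "tno C X X"] hex by (simp add: ty)
  have "sym C (tno C X X) X = sym C (tno C X X) X \<cdot> (?H \<cdot> ?K)"
    using HK by (simp add: ty nf)
  also have "\<dots> = (sym C (tno C X X) X \<cdot> ?H) \<cdot> ?K" by (simp add: ty nf)
  also have "\<dots> = ?K" using inv by (simp add: ty nf)
  finally show ?thesis .
qed

lemma lemC: "(sg \<otimes> one) \<cdot> (one \<otimes> et) = (one \<otimes> sg) \<cdot> (et \<otimes> one)"
proof -
  have nat: "sym C X (tno C X X) \<cdot> (one \<otimes> et) = et \<otimes> one"
    using sym_nat[of one et] sym_unit[of X] by (simp add: ty nf)
  have a: "(one \<otimes> sg) \<cdot> (one \<otimes> sg) = idt C (tno C X (tno C X X))"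
    using tnm_cmp[of one one sg sg] sgsg by (simp add: ty nf)
  have "(sg \<otimes> one) \<cdot> (one \<otimes> et) = ((one \<otimes> sg) \<cdot> (one \<otimes> sg)) \<cdot> (sg \<otimes> one) \<cdot> (one \<otimes> et)"
    using a by (simp add: ty nf)
  also have "\<dots> = (one \<otimes> sg) \<cdot> (sym C X (tno C X X) \<cdot> (one \<otimes> et))"
    using hex by (simp add: ty nf)
  also have "\<dots> = (one \<otimes> sg) \<cdot> (et \<otimes> one)" using nat by simp
  finally show ?thesis .
qed

lemma lemD: "(one \<otimes> mu) \<cdot> (sg \<otimes> one) \<cdot> (one \<otimes> et) = d"
proof -
  have "(one \<otimes> mu) \<cdot> (sg \<otimes> one) \<cdot> (one \<otimes> et) = ((one \<otimes> mu) \<cdot> (one \<otimes> sg)) \<cdot> (et \<otimes> one)"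
    using lemC by (simp add: ty nf)
  also have "\<dots> = (one \<otimes> mu) \<cdot> (et \<otimes> one)"
    using tnm_cmp[of one one sg mu] comm_mu by (simp add: ty nf)
  also have "\<dots> = d" using SA by simp
  finally show ?thesis .
qed

lemma part2: "cmp C (tnm C (tnm C (idt C X) (dag C (eta C X))) (idt C X))
           (cmp C (tnm C (sym C X X) d) (tnm C (idt C X) (eta C X))) = d"
proof -
  have a: "sg \<otimes> d = (XX \<otimes> d) \<cdot> (sg \<otimes> one)"
    using tnm_cmp[of sg XX one d] by (simp add: ty nf)
  have b: "(one \<otimes> etd \<otimes> one) \<cdot> (XX \<otimes> d) = one \<otimes> mu"
    using tnm_cmp[of one one "one \<otimes> d" "etd \<otimes> one"] SAd[symmetric] by (simp add: ty nf)
  have "cmp C (tnm C (tnm C (idt C X) (dag C (eta C X))) (idt C X))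
           (cmp C (tnm C (sym C X X) d) (tnm C (idt C X) (eta C X)))
     = ((one \<otimes> etd \<otimes> one) \<cdot> (XX \<otimes> d)) \<cdot> (sg \<otimes> one) \<cdot> (one \<otimes> et)"
    using a by (simp add: ty nf)
  also have "\<dots> = d" using b lemD by simp
  finally show ?thesis .
qed

lemma lemG: "(etd \<otimes> one) \<cdot> (one \<otimes> sg) \<cdot> (d \<otimes> one) = mu"
proof -
  have a: "(etd \<otimes> one) \<cdot> (sg \<otimes> one) = etd \<otimes> one"
    using tnm_cmp[of sg etd one one] etd_sym by (simp add: ty nf)
  have nat: "sym C (tno C X X) X \<cdot> (d \<otimes> one) = (one \<otimes> d) \<cdot> sg"
    using sym_nat[of d one] by (simp add: ty nf)
  have "(etd \<otimes> one) \<cdot> (one \<otimes> sg) \<cdot> (d \<otimes> one) = ((etd \<otimes> one) \<cdot> (sg \<otimes> one)) \<cdot> (one \<otimes> sg) \<cdot> (d \<otimes> one)"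
    using a by simp
  also have "\<dots> = (etd \<otimes> one) \<cdot> (sym C (tno C X X) X \<cdot> (d \<otimes> one))"
    using hexinv by (simp add: ty nf)
  also have "\<dots> = ((etd \<otimes> one) \<cdot> (one \<otimes> d)) \<cdot> sg" using nat by (simp add: ty nf)
  also have "\<dots> = mu" using SAd[symmetric] comm_mu by simp
  finally show ?thesis .
qed

lemma lemH: "(one \<otimes> etd) \<cdot> (d \<otimes> one) = mu"
proof -
  have "(one \<otimes> etd) \<cdot> (d \<otimes> one) = (one \<otimes> e) \<cdot> ((one \<otimes> mu) \<cdot> (d \<otimes> one))"
    using tnm_cmp[of one one mu e] etd_def by (simp add: ty nf)
  also have "\<dots> = ((one \<otimes> e) \<cdot> d) \<cdot> mu" using frobA[symmetric] by (simp add: ty nf)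
  also have "\<dots> = mu" using counitr by (simp add: ty nf)
  finally show ?thesis .
qed

lemma lemN: "one \<otimes> (etd \<cdot> (mu \<otimes> one)) = (one \<otimes> etd) \<cdot> (one \<otimes> mu \<otimes> one)"
  using tnm_cmp[of one one "mu \<otimes> one" etd] by (simp add: ty nf)

lemma part3: "dstar C d = mu"
proof -
  let ?W = "(one \<otimes> sg) \<cdot> (d \<otimes> one)"
  let ?E = "(etd \<otimes> etd) \<cdot> (one \<otimes> sg \<otimes> one)"
  have w1: "(one \<otimes> sg \<otimes> one) \<cdot> (d \<otimes> XX) = ?W \<otimes> one"
    using tnm_cmp[of "d \<otimes> one" "one \<otimes> sg" one one] by (simp add: ty nf)
  have w2: "etd \<otimes> etd = etd \<cdot> (etd \<otimes> XX)"
    using tnm_cmp[of etd "idt C I" XX etd] by (simp add: ty nf)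
  have w3: "(etd \<otimes> XX) \<cdot> (?W \<otimes> one) = mu \<otimes> one"
    using tnm_cmp[of ?W "etd \<otimes> one" one one] lemG by (simp add: ty nf)
  have e1: "?E \<cdot> (d \<otimes> XX) = etd \<cdot> (mu \<otimes> one)"
  proof -
    have "?E \<cdot> (d \<otimes> XX) = (etd \<otimes> etd) \<cdot> ((one \<otimes> sg \<otimes> one) \<cdot> (d \<otimes> XX))"
      by (simp add: ty nf)
    also have "\<dots> = etd \<cdot> ((etd \<otimes> XX) \<cdot> (?W \<otimes> one))" using w1 w2 by (simp add: ty nf)
    also have "\<dots> = etd \<cdot> (mu \<otimes> one)" using w3 by simp
    finally show ?thesis .
  qed
  have e2: "(one \<otimes> ?E) \<cdot> (one \<otimes> d \<otimes> XX) = one \<otimes> (?E \<cdot> (d \<otimes> XX))"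
    using tnm_cmp[of one one "d \<otimes> XX" ?E] by (simp add: ty nf)
  have "dstar C d = (one \<otimes> ?E) \<cdot> (one \<otimes> d \<otimes> XX) \<cdot> (et \<otimes> XX)"
    unfolding dstar_def Let_def by (simp add: ty nf dual_tno eta_tno dag_cmp dag_tnm dag_sym)
  also have "\<dots> = ((one \<otimes> ?E) \<cdot> (one \<otimes> d \<otimes> XX)) \<cdot> (et \<otimes> XX)"
    by (simp add: ty nf)
  also have "\<dots> = (one \<otimes> etd) \<cdot> ((one \<otimes> mu \<otimes> one) \<cdot> (et \<otimes> XX))"
    using e1 e2 lemN by (simp add: ty nf)
  also have "\<dots> = mu" using s5 lemH by simp
  finally show ?thesis .
qed

lemma part4: "dstar C mu = d"
proof -
  let ?N = "etd \<cdot> (mu \<otimes> one)"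
  let ?V = "(sg \<otimes> one) \<cdot> (one \<otimes> et)"
  have p1: "(XX \<otimes> etd) \<cdot> (XX \<otimes> mu \<otimes> one) = XX \<otimes> ?N"
    using tnm_cmp[of XX XX "mu \<otimes> one" etd] by (simp add: ty nf)
  have p2: "((one \<otimes> sg \<otimes> one) \<cdot> (et \<otimes> et)) \<otimes> one = (one \<otimes> sg \<otimes> XX) \<cdot> (et \<otimes> et \<otimes> one)"
    using tnm_cmp[of "et \<otimes> et" "one \<otimes> sg \<otimes> one" one one] by (simp add: ty nf)
  have p3: "et \<otimes> et \<otimes> one = (XX \<otimes> et \<otimes> one) \<cdot> (et \<otimes> one)"
    using tnm_cmp[of et XX one "et \<otimes> one"] by (simp add: ty nf)
  have p4: "(sg \<otimes> XX) \<cdot> (one \<otimes> et \<otimes> one) = ?V \<otimes> one"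
    using tnm_cmp[of "one \<otimes> et" "sg \<otimes> one" one one] by (simp add: ty nf)
  have p5: "(one \<otimes> sg \<otimes> XX) \<cdot> (XX \<otimes> et \<otimes> one) = one \<otimes> (?V \<otimes> one)"
    using tnm_cmp[of one one "one \<otimes> et \<otimes> one" "sg \<otimes> XX"] p4 by (simp add: ty nf)
  have p6: "(XX \<otimes> ?N) \<cdot> (one \<otimes> ?V \<otimes> one) = one \<otimes> ((one \<otimes> ?N) \<cdot> (?V \<otimes> one))"
    using tnm_cmp[of one one "?V \<otimes> one" "one \<otimes> ?N"] by (simp add: ty nf)
  have p7a: "(one \<otimes> mu \<otimes> one) \<cdot> (?V \<otimes> one) = d \<otimes> one"
    using tnm_cmp[of ?V "one \<otimes> mu" one one] lemD by (simp add: ty nf)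
  have p7: "(one \<otimes> ?N) \<cdot> (?V \<otimes> one) = mu"
  proof -
    have "(one \<otimes> ?N) \<cdot> (?V \<otimes> one) = (one \<otimes> etd) \<cdot> ((one \<otimes> mu \<otimes> one) \<cdot> (?V \<otimes> one))"
      using lemN by (simp add: ty nf)
    also have "\<dots> = mu" using p7a lemH by simp
    finally show ?thesis .
  qed
  have "dstar C mu = (XX \<otimes> etd) \<cdot> (XX \<otimes> mu \<otimes> one) \<cdot> (((one \<otimes> sg \<otimes> one) \<cdot> (et \<otimes> et)) \<otimes> one)"
    unfolding dstar_def Let_def by (simp add: ty nf dual_tno eta_tno dag_cmp dag_tnm dag_sym)
  also have "\<dots> = ((XX \<otimes> etd) \<cdot> (XX \<otimes> mu \<otimes> one)) \<cdot> ((one \<otimes> sg \<otimes> XX) \<cdot> (XX \<otimes> et \<otimes> one)) \<cdot> (et \<otimes> one)"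
    using p2 p3 by (simp add: ty nf)
  also have "\<dots> = ((XX \<otimes> ?N) \<cdot> (one \<otimes> ?V \<otimes> one)) \<cdot> (et \<otimes> one)"
    using p1 p5 by (simp add: ty nf)
  also have "\<dots> = d" using p6 p7 SA[symmetric] by simp
  finally show ?thesis .
qed

end

theorem mainTheorem3:
  fixes C :: "('o, 'm) dcat" and X :: 'o and d e :: 'm
  assumes "dagger_compact C"
    and "comm_comonoid C X d e"
    and "self_adjoint C X d e"
  shows "cmp C d (dag C d) = cmp C (tnm C (dag C d) (idt C X)) (tnm C (idt C X) d) \<and>
         cmp C (tnm C (tnm C (idt C X) (dag C (eta C X))) (idt C X))
           (cmp C (tnm C (sym C X X) d) (tnm C (idt C X) (eta C X))) = d \<and>
         dconj C d = d \<and> dstar C d = dag C d"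
proof -
  interpret sac C X d e using assms by (simp add: sac_def sac_axioms_def)
  show ?thesis using frob part2 part3 part4 unfolding dconj_def by simp
qed

end
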